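(* Let $P:\mathcal{C}^{\mathrm{op}}\to\mathbf{Pos}$ be a slat-doctrine such that every fibre $P(A)$ has finite joins and every reindexing map $P_f$ preserves them. Then every fibre $P^{un}(A)$ of the universal completion has finite joins and every reindexing map $P^{un}_f$ preserves them.
   Context: A slat-doctrine is a functor $P:\mathcal{C}^{\mathrm{op}}\to\mathbf{Pos}$ with $\mathcal{C}$ having finite products; $P_f:P(Y)\to P(X)$ is reindexing along $f:X\to Y$. Universal completion: $P^{un}(A)$ is the poset (reflection of the preorder) of triples $(A,B,\alpha)$ with $\alpha\in P(A\times B)$, where $(A,B,\alpha)\le(A,C,\beta)$ iff there is $g:A\times C\to B$ with $P_{\langle\mathrm{pr}_A,g\rangle}(\alpha)\le\beta$; for $f:A\to C$, $P^{un}_f(C,D,\gamma)=(A,D,P_{f\times 1_D}(\gamma))$. *)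

theory Defs
  imports Main
begin

(* A category whose objects are all elements of type 'o and whose arrows are all
   elements of type 'a, equipped with chosen finite products (terminal object and
   binary products with projections).  Composition: ccomp g f = g o f (defined when
   ccod f = cdom g). *)
record ('o, 'a) fpcat =
  cdom  :: "'a \<Rightarrow> 'o"
  ccod  :: "'a \<Rightarrow> 'o"
  ccomp :: "'a \<Rightarrow> 'a \<Rightarrow> 'a"
  cid   :: "'o \<Rightarrow> 'a"
  cterm :: "'o"
  cprod :: "'o \<Rightarrow> 'o \<Rightarrow> 'o"
  cpr1  :: "'o \<Rightarrow> 'o \<Rightarrow> 'a"
  cpr2  :: "'o \<Rightarrow> 'o \<Rightarrow> 'a"

definition is_fp_category :: "('o, 'a) fpcat \<Rightarrow> bool" where
  "is_fp_category C \<longleftrightarrow>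
     (\<forall>A. cdom C (cid C A) = A \<and> ccod C (cid C A) = A)
   \<and> (\<forall>f g. ccod C f = cdom C g \<longrightarrow>
          cdom C (ccomp C g f) = cdom C f \<and> ccod C (ccomp C g f) = ccod C g)
   \<and> (\<forall>f. ccomp C f (cid C (cdom C f)) = f \<and> ccomp C (cid C (ccod C f)) f = f)
   \<and> (\<forall>f g h. ccod C f = cdom C g \<and> ccod C g = cdom C h \<longrightarrow>
          ccomp C h (ccomp C g f) = ccomp C (ccomp C h g) f)
   \<and> (\<forall>A. \<exists>!t. cdom C t = A \<and> ccod C t = cterm C)
   \<and> (\<forall>A B. cdom C (cpr1 C A B) = cprod C A B \<and> ccod C (cpr1 C A B) = A
          \<and> cdom C (cpr2 C A B) = cprod C A B \<and> ccod C (cpr2 C A B) = B)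
   \<and> (\<forall>f g. cdom C f = cdom C g \<longrightarrow>
          (\<exists>!h. cdom C h = cdom C f \<and> ccod C h = cprod C (ccod C f) (ccod C g)
               \<and> ccomp C (cpr1 C (ccod C f) (ccod C g)) h = f
               \<and> ccomp C (cpr2 C (ccod C f) (ccod C g)) h = g))"

definition cpair :: "('o, 'a) fpcat \<Rightarrow> 'a \<Rightarrow> 'a \<Rightarrow> 'a" where
  "cpair C f g = (THE h. cdom C h = cdom C f \<and> ccod C h = cprod C (ccod C f) (ccod C g)
               \<and> ccomp C (cpr1 C (ccod C f) (ccod C g)) h = f
               \<and> ccomp C (cpr2 C (ccod C f) (ccod C g)) h = g)"

definition ctimes_id :: "('o, 'a) fpcat \<Rightarrow> 'a \<Rightarrow> 'o \<Rightarrow> 'a" where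
  "ctimes_id C f D = cpair C (ccomp C f (cpr1 C (cdom C f) D)) (cpr2 C (cdom C f) D)"

(* A slat-doctrine P : C^op \<rightarrow> Pos, given by fibre carriers Pc A, fibre orders le A
   and reindexing maps rx f : P(cod f) \<rightarrow> P(dom f). *)
definition is_doctrine ::
  "('o, 'a) fpcat \<Rightarrow> ('o \<Rightarrow> 'e set) \<Rightarrow> ('o \<Rightarrow> 'e \<Rightarrow> 'e \<Rightarrow> bool) \<Rightarrow> ('a \<Rightarrow> 'e \<Rightarrow> 'e) \<Rightarrow> bool"
where
  "is_doctrine C Pc le rx \<longleftrightarrow>
     (\<forall>A. (\<forall>x\<in>Pc A. le A x x)
        \<and> (\<forall>x\<in>Pc A. \<forall>y\<in>Pc A. le A x y \<and> le A y x \<longrightarrow> x = y)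
        \<and> (\<forall>x\<in>Pc A. \<forall>y\<in>Pc A. \<forall>z\<in>Pc A. le A x y \<and> le A y z \<longrightarrow> le A x z))
   \<and> (\<forall>f. \<forall>x\<in>Pc (ccod C f). rx f x \<in> Pc (cdom C f))
   \<and> (\<forall>f. \<forall>x\<in>Pc (ccod C f). \<forall>y\<in>Pc (ccod C f).
          le (ccod C f) x y \<longrightarrow> le (cdom C f) (rx f x) (rx f y))
   \<and> (\<forall>A. \<forall>x\<in>Pc A. rx (cid C A) x = x)
   \<and> (\<forall>f g. ccod C f = cdom C g \<longrightarrow>
          (\<forall>x\<in>Pc (ccod C g). rx (ccomp C g f) x = rx f (rx g x)))"

definition is_lub :: "'x set \<Rightarrow> ('x \<Rightarrow> 'x \<Rightarrow> bool) \<Rightarrow> 'x set \<Rightarrow> 'x \<Rightarrow> bool" where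
  "is_lub car le S j \<longleftrightarrow> j \<in> car \<and> (\<forall>x\<in>S. le x j)
     \<and> (\<forall>u\<in>car. (\<forall>x\<in>S. le x u) \<longrightarrow> le j u)"

definition has_finite_joins :: "'x set \<Rightarrow> ('x \<Rightarrow> 'x \<Rightarrow> bool) \<Rightarrow> bool" where
  "has_finite_joins car le \<longleftrightarrow> (\<forall>S. finite S \<and> S \<subseteq> car \<longrightarrow> (\<exists>j. is_lub car le S j))"

definition preserves_finite_joins ::
  "'x set \<Rightarrow> ('x \<Rightarrow> 'x \<Rightarrow> bool) \<Rightarrow> 'y set \<Rightarrow> ('y \<Rightarrow> 'y \<Rightarrow> bool) \<Rightarrow> ('x \<Rightarrow> 'y) \<Rightarrow> bool" where
  "preserves_finite_joins car le car' le' h \<longleftrightarrow>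
     (\<forall>S j. finite S \<and> S \<subseteq> car \<and> is_lub car le S j \<longrightarrow> is_lub car' le' (h ` S) (h j))"

(* Universal completion.  A triple (A,B,\<alpha>) of P^un(A) is represented by the pair (B,\<alpha>). *)
definition un_raw :: "('o, 'a) fpcat \<Rightarrow> ('o \<Rightarrow> 'e set) \<Rightarrow> 'o \<Rightarrow> ('o \<times> 'e) set" where
  "un_raw C Pc A = {(B, \<alpha>). \<alpha> \<in> Pc (cprod C A B)}"

definition un_pre ::
  "('o, 'a) fpcat \<Rightarrow> ('o \<Rightarrow> 'e \<Rightarrow> 'e \<Rightarrow> bool) \<Rightarrow> ('a \<Rightarrow> 'e \<Rightarrow> 'e) \<Rightarrow> 'o \<Rightarrow> 'o \<times> 'e \<Rightarrow> 'o \<times> 'e \<Rightarrow> bool"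
where
  "un_pre C le rx A x y \<longleftrightarrow>
     (\<exists>g. cdom C g = cprod C A (fst y) \<and> ccod C g = fst x
        \<and> le (cprod C A (fst y)) (rx (cpair C (cpr1 C A (fst y)) g) (snd x)) (snd y))"

definition un_equiv ::
  "('o, 'a) fpcat \<Rightarrow> ('o \<Rightarrow> 'e \<Rightarrow> 'e \<Rightarrow> bool) \<Rightarrow> ('a \<Rightarrow> 'e \<Rightarrow> 'e) \<Rightarrow> 'o \<Rightarrow> 'o \<times> 'e \<Rightarrow> 'o \<times> 'e \<Rightarrow> bool"
where
  "un_equiv C le rx A x y \<longleftrightarrow> un_pre C le rx A x y \<and> un_pre C le rx A y x"

definition un_class ::
  "('o, 'a) fpcat \<Rightarrow> ('o \<Rightarrow> 'e set) \<Rightarrow> ('o \<Rightarrow> 'e \<Rightarrow> 'e \<Rightarrow> bool) \<Rightarrow> ('a \<Rightarrow> 'e \<Rightarrow> 'e) \<Rightarrow> 'o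
     \<Rightarrow> 'o \<times> 'e \<Rightarrow> ('o \<times> 'e) set"
where
  "un_class C Pc le rx A x = {y \<in> un_raw C Pc A. un_equiv C le rx A x y}"

definition Pun ::
  "('o, 'a) fpcat \<Rightarrow> ('o \<Rightarrow> 'e set) \<Rightarrow> ('o \<Rightarrow> 'e \<Rightarrow> 'e \<Rightarrow> bool) \<Rightarrow> ('a \<Rightarrow> 'e \<Rightarrow> 'e) \<Rightarrow> 'o
     \<Rightarrow> ('o \<times> 'e) set set"
where
  "Pun C Pc le rx A = un_class C Pc le rx A ` un_raw C Pc A"

definition Pun_le ::
  "('o, 'a) fpcat \<Rightarrow> ('o \<Rightarrow> 'e \<Rightarrow> 'e \<Rightarrow> bool) \<Rightarrow> ('a \<Rightarrow> 'e \<Rightarrow> 'e) \<Rightarrow> 'o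
     \<Rightarrow> ('o \<times> 'e) set \<Rightarrow> ('o \<times> 'e) set \<Rightarrow> bool"
where
  "Pun_le C le rx A X Y \<longleftrightarrow> (\<exists>x\<in>X. \<exists>y\<in>Y. un_pre C le rx A x y)"

definition Pun_map ::
  "('o, 'a) fpcat \<Rightarrow> ('o \<Rightarrow> 'e set) \<Rightarrow> ('o \<Rightarrow> 'e \<Rightarrow> 'e \<Rightarrow> bool) \<Rightarrow> ('a \<Rightarrow> 'e \<Rightarrow> 'e) \<Rightarrow> 'a
     \<Rightarrow> ('o \<times> 'e) set \<Rightarrow> ('o \<times> 'e) set"
where
  "Pun_map C Pc le rx f Y =
     {z \<in> un_raw C Pc (cdom C f). \<exists>(D, \<gamma>)\<in>Y.
        un_equiv C le rx (cdom C f) (D, rx (ctimes_id C f D) \<gamma>) z}"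

end

theory Submission
  imports Defs
begin


definition cls :: "'x set \<Rightarrow> ('x \<Rightarrow> 'x \<Rightarrow> bool) \<Rightarrow> 'x \<Rightarrow> 'x set" where
  "cls X R x = {y\<in>X. R x y \<and> R y x}"
definition QL :: "('x \<Rightarrow> 'x \<Rightarrow> bool) \<Rightarrow> 'x set \<Rightarrow> 'x set \<Rightarrow> bool" where
  "QL R P P' \<longleftrightarrow> (\<exists>x\<in>P. \<exists>y\<in>P'. R x y)"

locale preo =
  fixes X :: "'x set" and R :: "'x \<Rightarrow> 'x \<Rightarrow> bool"
  assumes refl: "x\<in>X \<Longrightarrow> R x x"
    and trans: "x\<in>X \<Longrightarrow> y\<in>X \<Longrightarrow> z\<in>X \<Longrightarrow> R x y \<Longrightarrow> R y z \<Longrightarrow> R x z"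
begin

lemma self_cls: "x\<in>X \<Longrightarrow> x \<in> cls X R x"
  by (simp add: cls_def refl)

lemma QL_cls: "x\<in>X \<Longrightarrow> y\<in>X \<Longrightarrow> QL R (cls X R x) (cls X R y) \<longleftrightarrow> R x y"
proof
  assume xy: "x\<in>X" "y\<in>X" "QL R (cls X R x) (cls X R y)"
  then obtain x' y' where "x'\<in>X" "y'\<in>X" "R x x'" "R y' y" "R x' y'"
    unfolding QL_def cls_def by blast
  then show "R x y" using xy trans by blast
next
  assume "x\<in>X" "y\<in>X" "R x y"
  then show "QL R (cls X R x) (cls X R y)" unfolding QL_def using self_cls by blast
qed

lemma cls_eq: "x\<in>X \<Longrightarrow> y\<in>X \<Longrightarrow> R x y \<Longrightarrow> R y x \<Longrightarrow> cls X R x = cls X R y"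
  unfolding cls_def using trans by blast

lemma lub_equiv: "is_lub X R S r \<Longrightarrow> S \<subseteq> X \<Longrightarrow> r'\<in>X \<Longrightarrow> R r r' \<Longrightarrow> R r' r \<Longrightarrow> is_lub X R S r'"
  unfolding is_lub_def using trans by blast

lemma fin_joins:
  assumes b: "b\<in>X" "\<forall>u\<in>X. R b u"
    and J: "\<forall>a\<in>X. \<forall>c\<in>X. \<exists>r. is_lub X R {a,c} r"
  shows "\<forall>S. finite S \<and> S \<subseteq> cls X R ` X \<longrightarrow> (\<exists>j. is_lub (cls X R ` X) (QL R) S j)"
proof (intro allI impI, elim conjE)
  fix S assume "finite S" "S \<subseteq> cls X R ` X"
  then show "\<exists>j. is_lub (cls X R ` X) (QL R) S j"
  proof (induction S rule: finite_induct)
    case empty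
    show ?case
      apply (rule exI[of _ "cls X R b"])
      using b by (auto simp: is_lub_def QL_cls)
  next
    case (insert P S)
    then obtain j where j: "is_lub (cls X R ` X) (QL R) S j" by auto
    then obtain r where r: "r\<in>X" "j = cls X R r" by (auto simp: is_lub_def)
    from insert obtain a where a: "a\<in>X" "P = cls X R a" by auto
    from J a r obtain r' where r': "is_lub X R {a,r} r'" by blast
    have r'X: "r'\<in>X" using r' by (simp add: is_lub_def)
    show ?case
    proof (rule exI[of _ "cls X R r'"], unfold is_lub_def, intro conjI ballI impI)
      show "cls X R r' \<in> cls X R ` X" using r'X by auto
    next
      fix x assume "x \<in> insert P S"
      then show "QL R x (cls X R r')"
      proof
        assume "x = P" then show ?thesis using a r' r'X by (simp add: QL_cls is_lub_def)
      next
        assume xS: "x \<in> S"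
        then obtain s where s: "s\<in>X" "x = cls X R s" using insert by auto
        have "QL R x j" using j xS by (simp add: is_lub_def)
        hence "R s r" using s r by (simp add: QL_cls)
        moreover have "R r r'" using r' by (simp add: is_lub_def)
        ultimately have "R s r'" using s r r'X trans by blast
        then show ?thesis using s r'X by (simp add: QL_cls)
      qed
    next
      fix u assume u: "u \<in> cls X R ` X" and ub: "\<forall>x\<in>insert P S. QL R x u"
      then obtain w where w: "w\<in>X" "u = cls X R w" by auto
      have "R a w" using ub a w by (simp add: QL_cls)
      moreover have "QL R j u" using j ub u unfolding is_lub_def by blast
      hence "R r w" using r w by (simp add: QL_cls)
      ultimately have "R r' w" using r' w by (simp add: is_lub_def)
      then show "QL R (cls X R r') u" using w r'X by (simp add: QL_cls)
    qed
  qed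
qed

end

lemma pres:
  assumes PX: "preo X R" and PY: "preo Y S"
    and mX: "\<forall>x\<in>X. m x \<in> Y"
    and mono: "\<forall>x\<in>X. \<forall>y\<in>X. R x y \<longrightarrow> S (m x) (m y)"
    and bot: "b\<in>X" "\<forall>u\<in>X. R b u"
    and J: "\<forall>a\<in>X. \<forall>c\<in>X. \<exists>r. is_lub X R {a,c} r"
    and mbot: "\<forall>b\<in>X. (\<forall>u\<in>X. R b u) \<longrightarrow> (\<forall>u\<in>Y. S (m b) u)"
    and mjoin: "\<forall>a\<in>X. \<forall>c\<in>X. \<forall>r. is_lub X R {a,c} r \<longrightarrow> is_lub Y S {m a, m c} (m r)"
    and H: "\<forall>x\<in>X. H (cls X R x) = cls Y S (m x)"
  shows "preserves_finite_joins (cls X R ` X) (QL R) (cls Y S ` Y) (QL S) H"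
proof -
  interpret x: preo X R by (rule PX)
  interpret y: preo Y S by (rule PY)
  have FJ: "\<forall>S. finite S \<and> S \<subseteq> cls X R ` X \<longrightarrow> (\<exists>j. is_lub (cls X R ` X) (QL R) S j)"
    by (rule x.fin_joins[OF bot J])
  have main: "finite T \<Longrightarrow> T \<subseteq> cls X R ` X \<Longrightarrow> \<forall>j. is_lub (cls X R ` X) (QL R) T j
     \<longrightarrow> is_lub (cls Y S ` Y) (QL S) (H ` T) (H j)" for T
  proof (induction T rule: finite_induct)
    case empty
    show ?case
    proof (intro allI impI)
      fix j assume j: "is_lub (cls X R ` X) (QL R) {} j"
      then obtain r where r: "r\<in>X" "j = cls X R r" by (auto simp: is_lub_def)
      have "\<forall>u\<in>X. R r u" using j r by (auto simp: is_lub_def x.QL_cls)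
      hence "\<forall>u\<in>Y. S (m r) u" using mbot r by blast
      then show "is_lub (cls Y S ` Y) (QL S) (H ` {}) (H j)"
        using r H mX by (auto simp: is_lub_def y.QL_cls)
    qed
  next
    case (insert P T)
    show ?case
    proof (intro allI impI)
      fix j assume j: "is_lub (cls X R ` X) (QL R) (insert P T) j"
      then obtain r where r: "r\<in>X" "j = cls X R r" by (auto simp: is_lub_def)
      from insert.prems obtain a where a: "a\<in>X" "P = cls X R a" by auto
      from FJ insert obtain j0 where j0: "is_lub (cls X R ` X) (QL R) T j0" by auto
      then obtain r0 where r0: "r0\<in>X" "j0 = cls X R r0" by (auto simp: is_lub_def)
      have IH: "is_lub (cls Y S ` Y) (QL S) (H ` T) (H j0)" using insert j0 by auto
      have rl: "is_lub X R {a, r0} r"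
        unfolding is_lub_def
      proof (intro conjI ballI impI)
        show "r \<in> X" by (rule r(1))
      next
        fix s assume "s \<in> {a, r0}"
        moreover have "R a r" using j a r by (simp add: is_lub_def x.QL_cls)
        moreover have "R r0 r" using j0 j r r0 by (simp add: is_lub_def x.QL_cls)
        ultimately show "R s r" by auto
      next
        fix u assume u: "u\<in>X" "\<forall>s\<in>{a, r0}. R s u"
        have "\<forall>x\<in>insert P T. QL R x (cls X R u)"
        proof
          fix x assume "x \<in> insert P T"
          then show "QL R x (cls X R u)"
          proof
            assume "x = P" then show ?thesis using a u by (simp add: x.QL_cls)
          next
            assume xT: "x \<in> T"
            then obtain s where s: "s\<in>X" "x = cls X R s" using insert by auto
            have "QL R x j0" using j0 xT by (simp add: is_lub_def)
            hence "R s r0" using s r0 by (simp add: x.QL_cls)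
            then have "R s u" using s r0 u x.trans by blast
            then show ?thesis using s u by (simp add: x.QL_cls)
          qed
        qed
        then have "QL R j (cls X R u)" using j u unfolding is_lub_def by blast
        then show "R r u" using r u by (simp add: x.QL_cls)
      qed
      have ml: "is_lub Y S {m a, m r0} (m r)" using mjoin a r0 rl by blast
      have mrY: "m r \<in> Y" using mX r by auto
      have Hj: "H j = cls Y S (m r)" using H r by auto
      have Hj0: "H j0 = cls Y S (m r0)" using H r0 by auto
      show "is_lub (cls Y S ` Y) (QL S) (H ` insert P T) (H j)"
        unfolding is_lub_def Hj
      proof (intro conjI ballI impI)
        show "cls Y S (m r) \<in> cls Y S ` Y" using mrY by auto
      next
        fix x assume "x \<in> H ` insert P T"
        then consider "x = H P" | "x \<in> H ` T" by auto
        then show "QL S x (cls Y S (m r))"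
        proof cases
          case 1 then show ?thesis using ml a H mX mrY by (simp add: y.QL_cls is_lub_def)
        next
          case 2
          then have x: "QL S x (cls Y S (m r0))" using IH unfolding Hj0 is_lub_def by blast
          from 2 obtain s where s: "s\<in>Y" "x = cls Y S s" using insert H mX by force
          have "S s (m r0)" using x s mX r0 by (simp add: y.QL_cls)
          moreover have "S (m r0) (m r)" using ml by (simp add: is_lub_def)
          ultimately have "S s (m r)" using s mX r0 mrY y.trans by blast
          then show ?thesis using s mrY by (simp add: y.QL_cls)
        qed
      next
        fix u assume u: "u \<in> cls Y S ` Y" and ub: "\<forall>x\<in>H ` insert P T. QL S x u"
        then obtain w where w: "w\<in>Y" "u = cls Y S w" by auto
        have "QL S (H P) u" using ub by blast
        moreover have "H P = cls Y S (m a)" using H a by blast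
        ultimately have "QL S (cls Y S (m a)) (cls Y S w)" using w(2) by simp
        moreover have maY: "m a \<in> Y" using mX a by blast
        ultimately have "S (m a) w" using y.QL_cls[OF maY w(1)] by simp
        moreover have "QL S (H j0) u"
        proof -
          have L: "\<forall>u\<in>cls Y S ` Y. (\<forall>x\<in>H ` T. QL S x u) \<longrightarrow> QL S (H j0) u"
            using IH unfolding is_lub_def by (elim conjE)
          have "\<forall>x\<in>H ` T. QL S x u" using ub by auto
          then show ?thesis using L u by blast
        qed
        hence "S (m r0) w" using Hj0 r0 mX w by (simp add: y.QL_cls)
        ultimately have "S (m r) w" using ml w by (simp add: is_lub_def)
        then show "QL S (cls Y S (m r)) u" using w mrY by (simp add: y.QL_cls)
      qed
    qed
  qed
  show ?thesis unfolding preserves_finite_joins_def using main by blast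
qed



locale dctx =
  fixes C :: "('o, 'a) fpcat"
    and Pc :: "'o \<Rightarrow> 'e set"
    and le :: "'o \<Rightarrow> 'e \<Rightarrow> 'e \<Rightarrow> bool"
    and rx :: "'a \<Rightarrow> 'e \<Rightarrow> 'e"
  assumes cat: "is_fp_category C"
    and doc: "is_doctrine C Pc le rx"
    and fj: "\<forall>A. has_finite_joins (Pc A) (le A)"
    and pj: "\<forall>f. preserves_finite_joins (Pc (ccod C f)) (le (ccod C f))
                                    (Pc (cdom C f)) (le (cdom C f)) (rx f)"
begin

abbreviation "cd \<equiv> cdom C"
abbreviation "cc \<equiv> ccod C"
abbreviation "cp \<equiv> ccomp C"
abbreviation "p1 \<equiv> cpr1 C"
abbreviation "p2 \<equiv> cpr2 C"
abbreviation "pr \<equiv> cprod C"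
abbreviation "pa \<equiv> cpair C"
abbreviation "T \<equiv> cterm C"

lemma id_dc: "cd (cid C A) = A" "cc (cid C A) = A"
  using cat unfolding is_fp_category_def by auto

lemma comp_dc: "cc f = cd g \<Longrightarrow> cd (cp g f) = cd f \<and> cc (cp g f) = cc g"
  using cat unfolding is_fp_category_def by auto

lemma id_r: "cp f (cid C (cd f)) = f"
  using cat unfolding is_fp_category_def by auto

lemma assoc: "cc f = cd g \<Longrightarrow> cc g = cd h \<Longrightarrow> cp h (cp g f) = cp (cp h g) f"
  using cat unfolding is_fp_category_def by auto

lemma pr_dc: "cd (p1 A B) = pr A B" "cc (p1 A B) = A" "cd (p2 A B) = pr A B" "cc (p2 A B) = B"
  using cat unfolding is_fp_category_def by auto

lemma term_ex1: "\<forall>A. \<exists>!t. cd t = A \<and> cc t = T"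
  using cat unfolding is_fp_category_def by (elim conjE)

lemma term_ex: "\<exists>t. cd t = Y \<and> cc t = T"
  using term_ex1 by blast

lemma pa_ex1: "cd f = cd g \<Longrightarrow> \<exists>!h. cd h = cd f \<and> cc h = pr (cc f) (cc g)
               \<and> cp (p1 (cc f) (cc g)) h = f \<and> cp (p2 (cc f) (cc g)) h = g"
proof -
  have "\<forall>f g. cd f = cd g \<longrightarrow>
          (\<exists>!h. cd h = cd f \<and> cc h = pr (cc f) (cc g)
               \<and> cp (p1 (cc f) (cc g)) h = f
               \<and> cp (p2 (cc f) (cc g)) h = g)"
    using cat unfolding is_fp_category_def by (elim conjE)
  then show "cd f = cd g \<Longrightarrow> ?thesis" by blast
qed

lemma pa_props:
  assumes "cd f = X" "cd g = X" "cc f = A" "cc g = B"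
  shows "cd (pa f g) = X \<and> cc (pa f g) = pr A B \<and> cp (p1 A B) (pa f g) = f \<and> cp (p2 A B) (pa f g) = g"
proof -
  have "cd f = cd g" using assms by simp
  from theI'[OF pa_ex1[OF this]] show ?thesis using assms unfolding cpair_def by simp
qed

lemma pa_uniq:
  assumes "cd f = X" "cd g = X" "cc f = A" "cc g = B"
    and "cd h = X" "cc h = pr A B" "cp (p1 A B) h = f" "cp (p2 A B) h = g"
  shows "h = pa f g"
proof -
  have e: "cd f = cd g" using assms by simp
  have "\<exists>!h. cd h = cd f \<and> cc h = pr (cc f) (cc g)
               \<and> cp (p1 (cc f) (cc g)) h = f \<and> cp (p2 (cc f) (cc g)) h = g" by (rule pa_ex1[OF e])
  then show ?thesis using assms pa_props[OF assms(1-4)] by metis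
qed

lemma pa_comp:
  assumes "cd f = X" "cd g = X" "cc f = A" "cc g = B" "cc h = X"
  shows "cp (pa f g) h = pa (cp f h) (cp g h)"
proof -
  note P = pa_props[OF assms(1-4)]
  have d: "cd (cp f h) = cd h" "cd (cp g h) = cd h" "cc (cp f h) = A" "cc (cp g h) = B"
    using comp_dc assms by auto
  have c: "cd (cp (pa f g) h) = cd h" "cc (cp (pa f g) h) = pr A B"
    using comp_dc[of h "pa f g"] P assms by auto
  have "cp (p1 A B) (cp (pa f g) h) = cp f h"
    using assoc[of h "pa f g" "p1 A B"] P assms pr_dc by simp
  moreover have "cp (p2 A B) (cp (pa f g) h) = cp g h"
    using assoc[of h "pa f g" "p2 A B"] P assms pr_dc by simp
  ultimately show ?thesis using pa_uniq[OF d c] by simp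
qed

lemma pa_id: "pa (p1 A B) (p2 A B) = cid C (pr A B)"
proof -
  have "cid C (pr A B) = pa (p1 A B) (p2 A B)"
    apply (rule pa_uniq[where X="pr A B" and A=A and B=B])
    using pr_dc id_dc id_r[of "p1 A B"] id_r[of "p2 A B"] by auto
  then show ?thesis by simp
qed

lemma le_refl: "x \<in> Pc A \<Longrightarrow> le A x x"
  using doc unfolding is_doctrine_def by blast
lemma le_trans: "x \<in> Pc A \<Longrightarrow> y \<in> Pc A \<Longrightarrow> z \<in> Pc A \<Longrightarrow> le A x y \<Longrightarrow> le A y z \<Longrightarrow> le A x z"
  using doc unfolding is_doctrine_def by blast
lemma rx_in: "x \<in> Pc (cc f) \<Longrightarrow> rx f x \<in> Pc (cd f)"
  using doc unfolding is_doctrine_def by blast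
lemma rx_mono: "x \<in> Pc (cc f) \<Longrightarrow> y \<in> Pc (cc f) \<Longrightarrow> le (cc f) x y \<Longrightarrow> le (cd f) (rx f x) (rx f y)"
  using doc unfolding is_doctrine_def by blast
lemma rx_comp: "cc f = cd g \<Longrightarrow> x \<in> Pc (cc g) \<Longrightarrow> rx (cp g f) x = rx f (rx g x)"
  using doc unfolding is_doctrine_def by blast
lemma rx_id: "x \<in> Pc A \<Longrightarrow> rx (cid C A) x = x"
  using doc unfolding is_doctrine_def by blast
lemma lub_ex: "finite S \<Longrightarrow> S \<subseteq> Pc A \<Longrightarrow> \<exists>j. is_lub (Pc A) (le A) S j"
  using fj unfolding has_finite_joins_def by blast
lemma rx_lub: "finite S \<Longrightarrow> S \<subseteq> Pc (cc f) \<Longrightarrow> is_lub (Pc (cc f)) (le (cc f)) S j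
   \<Longrightarrow> is_lub (Pc (cd f)) (le (cd f)) (rx f ` S) (rx f j)"
  using pj unfolding preserves_finite_joins_def by blast

lemma un_pre_iff: "un_pre C le rx A (B, \<alpha>) (D, \<delta>) \<longleftrightarrow>
   (\<exists>g. cd g = pr A D \<and> cc g = B \<and> le (pr A D) (rx (pa (p1 A D) g) \<alpha>) \<delta>)"
  by (simp add: un_pre_def)

lemma raw_iff: "(B, \<alpha>) \<in> un_raw C Pc A \<longleftrightarrow> \<alpha> \<in> Pc (pr A B)"
  by (simp add: un_raw_def)

lemma pa1_dc: "cd g = pr A D \<Longrightarrow> cc g = B \<Longrightarrow> cd (pa (p1 A D) g) = pr A D \<and> cc (pa (p1 A D) g) = pr A B"
  using pa_props[of "p1 A D" "pr A D" g A B] pr_dc by auto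

lemma preo_raw: "preo (un_raw C Pc A) (un_pre C le rx A)"
proof
  fix x assume "x \<in> un_raw C Pc A"
  then obtain B \<alpha> where x: "x = (B, \<alpha>)" "\<alpha> \<in> Pc (pr A B)" by (cases x) (auto simp: raw_iff)
  show "un_pre C le rx A x x"
    unfolding x un_pre_iff
    apply (rule exI[of _ "p2 A B"])
    using pr_dc pa_id rx_id le_refl x(2) by simp
next
  fix x y z
  assume "x \<in> un_raw C Pc A" "y \<in> un_raw C Pc A" "z \<in> un_raw C Pc A"
    "un_pre C le rx A x y" "un_pre C le rx A y z"
  then obtain B \<alpha> C' \<beta> D \<delta> where xyz: "x = (B, \<alpha>)" "y = (C', \<beta>)" "z = (D, \<delta>)"
    and m: "\<alpha> \<in> Pc (pr A B)" "\<beta> \<in> Pc (pr A C')" "\<delta> \<in> Pc (pr A D)"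
    and r1: "un_pre C le rx A (B, \<alpha>) (C', \<beta>)" and r2: "un_pre C le rx A (C', \<beta>) (D, \<delta>)"
    by (cases x, cases y, cases z) (auto simp: raw_iff)
  from r1 obtain g where g: "cd g = pr A C'" "cc g = B" "le (pr A C') (rx (pa (p1 A C') g) \<alpha>) \<beta>"
    by (auto simp: un_pre_iff)
  from r2 obtain h where h: "cd h = pr A D" "cc h = C'" "le (pr A D) (rx (pa (p1 A D) h) \<beta>) \<delta>"
    by (auto simp: un_pre_iff)
  define ph where "ph = pa (p1 A D) h"
  define pg where "pg = pa (p1 A C') g"
  define k where "k = cp g ph"
  have ph: "cd ph = pr A D" "cc ph = pr A C'" using pa1_dc[OF h(1,2)] ph_def by auto
  have pg: "cd pg = pr A C'" "cc pg = pr A B" using pa1_dc[OF g(1,2)] pg_def by auto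
  have k: "cd k = pr A D" "cc k = B" using comp_dc[of ph g] ph g k_def by auto
  have p1ph: "cp (p1 A C') ph = p1 A D"
    using pa_props[of "p1 A D" "pr A D" h A C'] pr_dc h ph_def by auto
  have eq: "cp pg ph = pa (p1 A D) k"
    unfolding pg_def k_def
    using pa_comp[of "p1 A C'" "pr A C'" g A B ph] pr_dc g ph p1ph by simp
  have "rx (pa (p1 A D) k) \<alpha> = rx ph (rx pg \<alpha>)"
    using rx_comp[of ph pg \<alpha>] eq ph pg m by simp
  moreover have "le (pr A D) (rx ph (rx pg \<alpha>)) (rx ph \<beta>)"
    using rx_mono[of "rx pg \<alpha>" ph \<beta>] rx_in[of \<alpha> pg] ph pg m g pg_def by simp
  moreover have "rx ph (rx pg \<alpha>) \<in> Pc (pr A D)" "rx ph \<beta> \<in> Pc (pr A D)"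
    using rx_in ph pg m by (metis rx_in)+
  ultimately have "le (pr A D) (rx (pa (p1 A D) k) \<alpha>) \<delta>"
    using le_trans h(3) m ph_def by metis
  then show "un_pre C le rx A x z" unfolding xyz un_pre_iff using k by blast
qed


lemma bot_ex: "\<exists>e. is_lub (Pc (pr A T)) (le (pr A T)) {} e"
  using lub_ex[of "{}"] by simp

lemma bot_rep:
  assumes e: "is_lub (Pc (pr A T)) (le (pr A T)) {} e"
  shows "\<forall>u\<in>un_raw C Pc A. un_pre C le rx A (T, e) u"
proof
  fix u assume "u \<in> un_raw C Pc A"
  then obtain D \<delta> where u: "u = (D, \<delta>)" "\<delta> \<in> Pc (pr A D)" by (cases u) (auto simp: raw_iff)
  obtain g where g: "cd g = pr A D" "cc g = T" using term_ex by blast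
  have f: "cd (pa (p1 A D) g) = pr A D" "cc (pa (p1 A D) g) = pr A T" using pa1_dc[OF g] by auto
  have "is_lub (Pc (pr A D)) (le (pr A D)) {} (rx (pa (p1 A D) g) e)"
    using rx_lub[of "{}" "pa (p1 A D) g" e] f e by simp
  then have "le (pr A D) (rx (pa (p1 A D) g) e) \<delta>" using u by (simp add: is_lub_def)
  then show "un_pre C le rx A (T, e) u" unfolding u un_pre_iff using g by blast
qed

definition pp :: "'o \<Rightarrow> 'o \<Rightarrow> 'o \<Rightarrow> 'a" where
  "pp A B C' = pa (p1 A (pr B C')) (cp (p1 B C') (p2 A (pr B C')))"
definition qq :: "'o \<Rightarrow> 'o \<Rightarrow> 'o \<Rightarrow> 'a" where
  "qq A B C' = pa (p1 A (pr B C')) (cp (p2 B C') (p2 A (pr B C')))"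

lemma pp_dc: "cd (pp A B C') = pr A (pr B C')" "cc (pp A B C') = pr A B"
proof -
  have "cd (cp (p1 B C') (p2 A (pr B C'))) = pr A (pr B C')" "cc (cp (p1 B C') (p2 A (pr B C'))) = B"
    using comp_dc[of "p2 A (pr B C')" "p1 B C'"] pr_dc by auto
  then show "cd (pp A B C') = pr A (pr B C')" "cc (pp A B C') = pr A B"
    using pa1_dc unfolding pp_def by auto
qed

lemma qq_dc: "cd (qq A B C') = pr A (pr B C')" "cc (qq A B C') = pr A C'"
proof -
  have "cd (cp (p2 B C') (p2 A (pr B C'))) = pr A (pr B C')" "cc (cp (p2 B C') (p2 A (pr B C'))) = C'"
    using comp_dc[of "p2 A (pr B C')" "p2 B C'"] pr_dc by auto
  then show "cd (qq A B C') = pr A (pr B C')" "cc (qq A B C') = pr A C'"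
    using pa1_dc unfolding qq_def by auto
qed

lemma join_rep:
  assumes a: "\<alpha> \<in> Pc (pr A B)" and b: "\<beta> \<in> Pc (pr A C')"
    and g: "is_lub (Pc (pr A (pr B C'))) (le (pr A (pr B C'))) {rx (pp A B C') \<alpha>, rx (qq A B C') \<beta>} \<gamma>"
  shows "is_lub (un_raw C Pc A) (un_pre C le rx A) {(B, \<alpha>), (C', \<beta>)} (pr B C', \<gamma>)"
  unfolding is_lub_def
proof (intro conjI ballI impI)
  let ?BC = "pr B C'"
  show "(?BC, \<gamma>) \<in> un_raw C Pc A" using g by (simp add: raw_iff is_lub_def)
  have g1: "cd (cp (p1 B C') (p2 A ?BC)) = pr A ?BC" "cc (cp (p1 B C') (p2 A ?BC)) = B"
    using comp_dc[of "p2 A ?BC" "p1 B C'"] pr_dc by auto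
  have g2: "cd (cp (p2 B C') (p2 A ?BC)) = pr A ?BC" "cc (cp (p2 B C') (p2 A ?BC)) = C'"
    using comp_dc[of "p2 A ?BC" "p2 B C'"] pr_dc by auto
  fix x assume "x \<in> {(B, \<alpha>), (C', \<beta>)}"
  moreover have "un_pre C le rx A (B, \<alpha>) (?BC, \<gamma>)"
    unfolding un_pre_iff using g1 g unfolding pp_def is_lub_def by blast
  moreover have "un_pre C le rx A (C', \<beta>) (?BC, \<gamma>)"
    unfolding un_pre_iff using g2 g unfolding qq_def is_lub_def by blast
  ultimately show "un_pre C le rx A x (?BC, \<gamma>)" by blast
next
  let ?BC = "pr B C'"
  fix u assume u: "u \<in> un_raw C Pc A" and ub: "\<forall>x\<in>{(B, \<alpha>), (C', \<beta>)}. un_pre C le rx A x u"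
  then obtain D \<delta> where uu: "u = (D, \<delta>)" "\<delta> \<in> Pc (pr A D)" by (cases u) (auto simp: raw_iff)
  from ub uu obtain g1 where g1: "cd g1 = pr A D" "cc g1 = B" "le (pr A D) (rx (pa (p1 A D) g1) \<alpha>) \<delta>"
    by (auto simp: un_pre_iff)
  from ub uu obtain g2 where g2: "cd g2 = pr A D" "cc g2 = C'" "le (pr A D) (rx (pa (p1 A D) g2) \<beta>) \<delta>"
    by (auto simp: un_pre_iff)
  define k where "k = pa g1 g2"
  have k: "cd k = pr A D" "cc k = ?BC" "cp (p1 B C') k = g1" "cp (p2 B C') k = g2"
    using pa_props[OF g1(1) g2(1) g1(2) g2(2)] k_def by auto
  define f where "f = pa (p1 A D) k"
  have f: "cd f = pr A D" "cc f = pr A ?BC" using pa1_dc[OF k(1,2)] f_def by auto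
  have fp: "cp (p1 A ?BC) f = p1 A D" "cp (p2 A ?BC) f = k"
    using pa_props[of "p1 A D" "pr A D" k A ?BC] pr_dc k f_def by auto
  have e1: "cp (pp A B C') f = pa (p1 A D) g1"
  proof -
    have "cp (pp A B C') f = pa (cp (p1 A ?BC) f) (cp (cp (p1 B C') (p2 A ?BC)) f)"
      unfolding pp_def
      using pa_comp[of "p1 A ?BC" "pr A ?BC" "cp (p1 B C') (p2 A ?BC)" A B f] pr_dc comp_dc f
      by (simp add: comp_dc pr_dc)
    also have "cp (cp (p1 B C') (p2 A ?BC)) f = cp (p1 B C') (cp (p2 A ?BC) f)"
      using assoc[of f "p2 A ?BC" "p1 B C'"] f pr_dc by simp
    finally show ?thesis using fp k by simp
  qed
  have e2: "cp (qq A B C') f = pa (p1 A D) g2"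
  proof -
    have "cp (qq A B C') f = pa (cp (p1 A ?BC) f) (cp (cp (p2 B C') (p2 A ?BC)) f)"
      unfolding qq_def
      using pa_comp[of "p1 A ?BC" "pr A ?BC" "cp (p2 B C') (p2 A ?BC)" A C' f] pr_dc comp_dc f
      by (simp add: comp_dc pr_dc)
    also have "cp (cp (p2 B C') (p2 A ?BC)) f = cp (p2 B C') (cp (p2 A ?BC) f)"
      using assoc[of f "p2 A ?BC" "p2 B C'"] f pr_dc by simp
    finally show ?thesis using fp k by simp
  qed
  have r1: "rx f (rx (pp A B C') \<alpha>) = rx (pa (p1 A D) g1) \<alpha>"
    using rx_comp[of f "pp A B C'" \<alpha>] f pp_dc a e1 by simp
  have r2: "rx f (rx (qq A B C') \<beta>) = rx (pa (p1 A D) g2) \<beta>"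
    using rx_comp[of f "qq A B C'" \<beta>] f qq_dc b e2 by simp
  have S: "{rx (pp A B C') \<alpha>, rx (qq A B C') \<beta>} \<subseteq> Pc (pr A ?BC)"
    using rx_in[of \<alpha> "pp A B C'"] rx_in[of \<beta> "qq A B C'"] pp_dc qq_dc a b by auto
  have "is_lub (Pc (pr A D)) (le (pr A D)) (rx f ` {rx (pp A B C') \<alpha>, rx (qq A B C') \<beta>}) (rx f \<gamma>)"
    using rx_lub[of "{rx (pp A B C') \<alpha>, rx (qq A B C') \<beta>}" f \<gamma>] S f g by simp
  then have "le (pr A D) (rx f \<gamma>) \<delta>"
    using r1 r2 g1 g2 uu unfolding is_lub_def by auto
  then show "un_pre C le rx A (pr B C', \<gamma>) u"
    unfolding uu un_pre_iff f_def using k by blast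
qed

lemma join_ex:
  assumes "(B, \<alpha>) \<in> un_raw C Pc A" "(C', \<beta>) \<in> un_raw C Pc A"
  shows "\<exists>r. is_lub (un_raw C Pc A) (un_pre C le rx A) {(B, \<alpha>), (C', \<beta>)} r"
proof -
  have a: "\<alpha> \<in> Pc (pr A B)" "\<beta> \<in> Pc (pr A C')" using assms by (auto simp: raw_iff)
  have S: "{rx (pp A B C') \<alpha>, rx (qq A B C') \<beta>} \<subseteq> Pc (pr A (pr B C'))"
    using rx_in[of \<alpha> "pp A B C'"] rx_in[of \<beta> "qq A B C'"] pp_dc qq_dc a by auto
  obtain \<gamma> where "is_lub (Pc (pr A (pr B C'))) (le (pr A (pr B C'))) {rx (pp A B C') \<alpha>, rx (qq A B C') \<beta>} \<gamma>"
    using lub_ex[OF _ S] by auto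
  then show ?thesis using join_rep a by blast
qed


definition mf :: "'a \<Rightarrow> 'o \<times> 'e \<Rightarrow> 'o \<times> 'e" where
  "mf f = (\<lambda>(D, \<gamma>). (D, rx (ctimes_id C f D) \<gamma>))"

lemma ti_props:
  "cd (ctimes_id C f D) = pr (cd f) D \<and> cc (ctimes_id C f D) = pr (cc f) D
   \<and> cp (p1 (cc f) D) (ctimes_id C f D) = cp f (p1 (cd f) D)
   \<and> cp (p2 (cc f) D) (ctimes_id C f D) = p2 (cd f) D"
proof -
  have "cd (cp f (p1 (cd f) D)) = pr (cd f) D" "cc (cp f (p1 (cd f) D)) = cc f"
    using comp_dc[of "p1 (cd f) D" f] pr_dc by auto
  then show ?thesis unfolding ctimes_id_def
    using pa_props[of "cp f (p1 (cd f) D)" "pr (cd f) D" "p2 (cd f) D" "cc f" D] pr_dc by auto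
qed

lemma mf_in: "x \<in> un_raw C Pc (cc f) \<Longrightarrow> mf f x \<in> un_raw C Pc (cd f)"
proof -
  assume x: "x \<in> un_raw C Pc (cc f)"
  obtain D b where xx: "x = (D, b)" by (cases x)
  have "b \<in> Pc (pr (cc f) D)" using x xx by (simp add: raw_iff)
  then have "rx (ctimes_id C f D) b \<in> Pc (pr (cd f) D)"
    using rx_in[of b "ctimes_id C f D"] ti_props[of f D] by simp
  then show ?thesis using xx by (simp add: mf_def raw_iff)
qed

lemma cp_p1_dc: "cd (cp f (p1 (cd f) B)) = pr (cd f) B" "cc (cp f (p1 (cd f) B)) = cc f"
  using comp_dc[of "p1 (cd f) B" f] pr_dc by auto

lemma mf_mono:
  assumes x: "x \<in> un_raw C Pc (cc f)" and y: "y \<in> un_raw C Pc (cc f)"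
    and r: "un_pre C le rx (cc f) x y"
  shows "un_pre C le rx (cd f) (mf f x) (mf f y)"
proof -
  let ?A = "cd f" and ?A' = "cc f"
  obtain B \<alpha> C' \<beta> where xy: "x = (B, \<alpha>)" "y = (C', \<beta>)" by (cases x, cases y)
  have a: "\<alpha> \<in> Pc (pr ?A' B)" "\<beta> \<in> Pc (pr ?A' C')" using x y xy by (auto simp: raw_iff)
  from r xy obtain g where g: "cd g = pr ?A' C'" "cc g = B" "le (pr ?A' C') (rx (pa (p1 ?A' C') g) \<alpha>) \<beta>"
    by (auto simp: un_pre_iff)
  let ?tB = "ctimes_id C f B" and ?tC = "ctimes_id C f C'"
  define g' where "g' = cp g ?tC"
  have g': "cd g' = pr ?A C'" "cc g' = B" using comp_dc[of ?tC g] ti_props g g'_def by auto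
  define h where "h = pa (p1 ?A C') g'"
  have h: "cd h = pr ?A C'" "cc h = pr ?A B" "cp (p1 ?A B) h = p1 ?A C'" "cp (p2 ?A B) h = g'"
    using pa_props[of "p1 ?A C'" "pr ?A C'" g' ?A B] pr_dc g' h_def by auto
  have eqL: "cp ?tB h = pa (cp f (p1 ?A C')) g'"
  proof -
    have "cp ?tB h = pa (cp (cp f (p1 ?A B)) h) (cp (p2 ?A B) h)"
      unfolding ctimes_id_def
      using pa_comp[of "cp f (p1 ?A B)" "pr ?A B" "p2 ?A B" ?A' B h] cp_p1_dc pr_dc h by simp
    also have "cp (cp f (p1 ?A B)) h = cp f (cp (p1 ?A B) h)"
      using assoc[of h "p1 ?A B" f] h pr_dc by simp
    finally show ?thesis using h by simp
  qed
  have eqR: "cp (pa (p1 ?A' C') g) ?tC = pa (cp f (p1 ?A C')) g'"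
    using pa_comp[of "p1 ?A' C'" "pr ?A' C'" g ?A' B ?tC] pr_dc g ti_props g'_def by simp
  have "rx h (rx ?tB \<alpha>) = rx (cp ?tB h) \<alpha>"
    using rx_comp[of h ?tB \<alpha>] h ti_props a by simp
  also have "\<dots> = rx (cp (pa (p1 ?A' C') g) ?tC) \<alpha>" using eqL eqR by simp
  also have "\<dots> = rx ?tC (rx (pa (p1 ?A' C') g) \<alpha>)"
    using rx_comp[of ?tC "pa (p1 ?A' C') g" \<alpha>] ti_props pa1_dc[OF g(1,2)] a by simp
  finally have e: "rx h (rx ?tB \<alpha>) = rx ?tC (rx (pa (p1 ?A' C') g) \<alpha>)" .
  have "le (pr ?A C') (rx ?tC (rx (pa (p1 ?A' C') g) \<alpha>)) (rx ?tC \<beta>)"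
    using rx_mono[of "rx (pa (p1 ?A' C') g) \<alpha>" ?tC \<beta>] rx_in[of \<alpha> "pa (p1 ?A' C') g"]
      pa1_dc[OF g(1,2)] ti_props a g(3) by simp
  then have "le (pr ?A C') (rx h (rx ?tB \<alpha>)) (rx ?tC \<beta>)" using e by simp
  then have "un_pre C le rx ?A (B, rx ?tB \<alpha>) (C', rx ?tC \<beta>)"
    unfolding un_pre_iff using g' h_def by blast
  then show ?thesis using xy by (simp add: mf_def)
qed

lemma mf_bot:
  assumes b: "b \<in> un_raw C Pc (cc f)" and bb: "\<forall>u\<in>un_raw C Pc (cc f). un_pre C le rx (cc f) b u"
  shows "\<forall>u\<in>un_raw C Pc (cd f). un_pre C le rx (cd f) (mf f b) u"
proof
  interpret P: preo "un_raw C Pc (cd f)" "un_pre C le rx (cd f)" by (rule preo_raw)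
  fix u assume u: "u \<in> un_raw C Pc (cd f)"
  obtain e where e: "is_lub (Pc (pr (cc f) T)) (le (pr (cc f) T)) {} e" using bot_ex by blast
  have b0: "(T, e) \<in> un_raw C Pc (cc f)" using e by (simp add: raw_iff is_lub_def)
  have "is_lub (Pc (pr (cd f) T)) (le (pr (cd f) T)) {} (rx (ctimes_id C f T) e)"
    using rx_lub[of "{}" "ctimes_id C f T" e] ti_props e by simp
  then have "un_pre C le rx (cd f) (mf f (T, e)) u"
    using bot_rep u by (simp add: mf_def)
  moreover have "un_pre C le rx (cd f) (mf f b) (mf f (T, e))"
    using mf_mono[OF b b0] bb b0 by blast
  ultimately show "un_pre C le rx (cd f) (mf f b) u"
    using P.trans mf_in b b0 u by blast
qed

lemma mf_join:
  assumes a: "a \<in> un_raw C Pc (cc f)" and c: "c \<in> un_raw C Pc (cc f)"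
    and r: "is_lub (un_raw C Pc (cc f)) (un_pre C le rx (cc f)) {a, c} r"
  shows "is_lub (un_raw C Pc (cd f)) (un_pre C le rx (cd f)) {mf f a, mf f c} (mf f r)"
proof -
  interpret P: preo "un_raw C Pc (cd f)" "un_pre C le rx (cd f)" by (rule preo_raw)
  let ?A = "cd f" and ?A' = "cc f"
  obtain B \<alpha> C' \<beta> where ac: "a = (B, \<alpha>)" "c = (C', \<beta>)" by (cases a, cases c)
  have m: "\<alpha> \<in> Pc (pr ?A' B)" "\<beta> \<in> Pc (pr ?A' C')" using a c ac by (auto simp: raw_iff)
  let ?BC = "pr B C'"
  have S: "{rx (pp ?A' B C') \<alpha>, rx (qq ?A' B C') \<beta>} \<subseteq> Pc (pr ?A' ?BC)"
    using rx_in[of \<alpha> "pp ?A' B C'"] rx_in[of \<beta> "qq ?A' B C'"] pp_dc qq_dc m by auto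
  obtain \<gamma> where g: "is_lub (Pc (pr ?A' ?BC)) (le (pr ?A' ?BC)) {rx (pp ?A' B C') \<alpha>, rx (qq ?A' B C') \<beta>} \<gamma>"
    using lub_ex[OF _ S] by auto
  have r0: "is_lub (un_raw C Pc ?A') (un_pre C le rx ?A') {a, c} (?BC, \<gamma>)"
    using join_rep[OF m g] ac by simp
  have rX: "r \<in> un_raw C Pc ?A'" and r0X: "(?BC, \<gamma>) \<in> un_raw C Pc ?A'"
    using r r0 by (auto simp: is_lub_def)
  have rr0: "un_pre C le rx ?A' r (?BC, \<gamma>)" "un_pre C le rx ?A' (?BC, \<gamma>) r"
    using r r0 rX r0X unfolding is_lub_def by blast+
  let ?t = "ctimes_id C f"
  have eqp: "cp (pp ?A' B C') (?t ?BC) = cp (?t B) (pp ?A B C')"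
  proof -
    have d1: "cd (cp (p1 B C') (p2 ?A' ?BC)) = pr ?A' ?BC" "cc (cp (p1 B C') (p2 ?A' ?BC)) = B"
      using comp_dc[of "p2 ?A' ?BC" "p1 B C'"] pr_dc by auto
    have "cp (pp ?A' B C') (?t ?BC) = pa (cp (p1 ?A' ?BC) (?t ?BC)) (cp (cp (p1 B C') (p2 ?A' ?BC)) (?t ?BC))"
      unfolding pp_def using pa_comp[of "p1 ?A' ?BC" "pr ?A' ?BC" "cp (p1 B C') (p2 ?A' ?BC)" ?A' B "?t ?BC"]
        pr_dc d1 ti_props by simp
    also have "cp (cp (p1 B C') (p2 ?A' ?BC)) (?t ?BC) = cp (p1 B C') (cp (p2 ?A' ?BC) (?t ?BC))"
      using assoc[of "?t ?BC" "p2 ?A' ?BC" "p1 B C'"] ti_props pr_dc by simp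
    finally have L: "cp (pp ?A' B C') (?t ?BC) = pa (cp f (p1 ?A ?BC)) (cp (p1 B C') (p2 ?A ?BC))"
      using ti_props by simp
    have d2: "cd (cp (p1 B C') (p2 ?A ?BC)) = pr ?A ?BC" "cc (cp (p1 B C') (p2 ?A ?BC)) = B"
      using comp_dc[of "p2 ?A ?BC" "p1 B C'"] pr_dc by auto
    have pp1: "cp (p1 ?A B) (pp ?A B C') = p1 ?A ?BC" "cp (p2 ?A B) (pp ?A B C') = cp (p1 B C') (p2 ?A ?BC)"
      unfolding pp_def using pa_props[of "p1 ?A ?BC" "pr ?A ?BC" "cp (p1 B C') (p2 ?A ?BC)" ?A B] pr_dc d2 by auto
    have "cp (?t B) (pp ?A B C') = pa (cp (cp f (p1 ?A B)) (pp ?A B C')) (cp (p2 ?A B) (pp ?A B C'))"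
      unfolding ctimes_id_def
      using pa_comp[of "cp f (p1 ?A B)" "pr ?A B" "p2 ?A B" ?A' B "pp ?A B C'"] cp_p1_dc pr_dc pp_dc by simp
    also have "cp (cp f (p1 ?A B)) (pp ?A B C') = cp f (cp (p1 ?A B) (pp ?A B C'))"
      using assoc[of "pp ?A B C'" "p1 ?A B" f] pp_dc pr_dc by simp
    finally show ?thesis using L pp1 by simp
  qed
  have eqq: "cp (qq ?A' B C') (?t ?BC) = cp (?t C') (qq ?A B C')"
  proof -
    have d1: "cd (cp (p2 B C') (p2 ?A' ?BC)) = pr ?A' ?BC" "cc (cp (p2 B C') (p2 ?A' ?BC)) = C'"
      using comp_dc[of "p2 ?A' ?BC" "p2 B C'"] pr_dc by auto
    have "cp (qq ?A' B C') (?t ?BC) = pa (cp (p1 ?A' ?BC) (?t ?BC)) (cp (cp (p2 B C') (p2 ?A' ?BC)) (?t ?BC))"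
      unfolding qq_def using pa_comp[of "p1 ?A' ?BC" "pr ?A' ?BC" "cp (p2 B C') (p2 ?A' ?BC)" ?A' C' "?t ?BC"]
        pr_dc d1 ti_props by simp
    also have "cp (cp (p2 B C') (p2 ?A' ?BC)) (?t ?BC) = cp (p2 B C') (cp (p2 ?A' ?BC) (?t ?BC))"
      using assoc[of "?t ?BC" "p2 ?A' ?BC" "p2 B C'"] ti_props pr_dc by simp
    finally have L: "cp (qq ?A' B C') (?t ?BC) = pa (cp f (p1 ?A ?BC)) (cp (p2 B C') (p2 ?A ?BC))"
      using ti_props by simp
    have d2: "cd (cp (p2 B C') (p2 ?A ?BC)) = pr ?A ?BC" "cc (cp (p2 B C') (p2 ?A ?BC)) = C'"
      using comp_dc[of "p2 ?A ?BC" "p2 B C'"] pr_dc by auto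
    have qq1: "cp (p1 ?A C') (qq ?A B C') = p1 ?A ?BC" "cp (p2 ?A C') (qq ?A B C') = cp (p2 B C') (p2 ?A ?BC)"
      unfolding qq_def using pa_props[of "p1 ?A ?BC" "pr ?A ?BC" "cp (p2 B C') (p2 ?A ?BC)" ?A C'] pr_dc d2 by auto
    have "cp (?t C') (qq ?A B C') = pa (cp (cp f (p1 ?A C')) (qq ?A B C')) (cp (p2 ?A C') (qq ?A B C'))"
      unfolding ctimes_id_def
      using pa_comp[of "cp f (p1 ?A C')" "pr ?A C'" "p2 ?A C'" ?A' C' "qq ?A B C'"] cp_p1_dc pr_dc qq_dc by simp
    also have "cp (cp f (p1 ?A C')) (qq ?A B C') = cp f (cp (p1 ?A C') (qq ?A B C'))"
      using assoc[of "qq ?A B C'" "p1 ?A C'" f] qq_dc pr_dc by simp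
    finally show ?thesis using L qq1 by simp
  qed
  have e1: "rx (?t ?BC) (rx (pp ?A' B C') \<alpha>) = rx (pp ?A B C') (rx (?t B) \<alpha>)"
  proof -
    have "rx (?t ?BC) (rx (pp ?A' B C') \<alpha>) = rx (cp (pp ?A' B C') (?t ?BC)) \<alpha>"
      using rx_comp[of "?t ?BC" "pp ?A' B C'" \<alpha>] ti_props pp_dc m by simp
    also have "\<dots> = rx (cp (?t B) (pp ?A B C')) \<alpha>" using eqp by simp
    also have "\<dots> = rx (pp ?A B C') (rx (?t B) \<alpha>)"
      using rx_comp[of "pp ?A B C'" "?t B" \<alpha>] ti_props pp_dc m by simp
    finally show ?thesis .
  qed
  have e2: "rx (?t ?BC) (rx (qq ?A' B C') \<beta>) = rx (qq ?A B C') (rx (?t C') \<beta>)"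
  proof -
    have "rx (?t ?BC) (rx (qq ?A' B C') \<beta>) = rx (cp (qq ?A' B C') (?t ?BC)) \<beta>"
      using rx_comp[of "?t ?BC" "qq ?A' B C'" \<beta>] ti_props qq_dc m by simp
    also have "\<dots> = rx (cp (?t C') (qq ?A B C')) \<beta>" using eqq by simp
    also have "\<dots> = rx (qq ?A B C') (rx (?t C') \<beta>)"
      using rx_comp[of "qq ?A B C'" "?t C'" \<beta>] ti_props qq_dc m by simp
    finally show ?thesis .
  qed
  have "is_lub (Pc (pr ?A ?BC)) (le (pr ?A ?BC)) (rx (?t ?BC) ` {rx (pp ?A' B C') \<alpha>, rx (qq ?A' B C') \<beta>}) (rx (?t ?BC) \<gamma>)"
    using rx_lub[of "{rx (pp ?A' B C') \<alpha>, rx (qq ?A' B C') \<beta>}" "?t ?BC" \<gamma>] S g ti_props by simp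
  then have g': "is_lub (Pc (pr ?A ?BC)) (le (pr ?A ?BC)) {rx (pp ?A B C') (rx (?t B) \<alpha>), rx (qq ?A B C') (rx (?t C') \<beta>)} (rx (?t ?BC) \<gamma>)"
    using e1 e2 by simp
  have m': "rx (?t B) \<alpha> \<in> Pc (pr ?A B)" "rx (?t C') \<beta> \<in> Pc (pr ?A C')"
    using rx_in ti_props m by metis+
  have j0: "is_lub (un_raw C Pc ?A) (un_pre C le rx ?A) {mf f a, mf f c} (mf f (?BC, \<gamma>))"
    using join_rep[OF m' g'] ac by (simp add: mf_def)
  have sub: "{mf f a, mf f c} \<subseteq> un_raw C Pc ?A" using mf_in a c by auto
  show ?thesis
    using P.lub_equiv[OF j0 sub mf_in[OF rX] mf_mono[OF r0X rX rr0(2)] mf_mono[OF rX r0X rr0(1)]] .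
qed

lemma H_cls:
  assumes x: "x \<in> un_raw C Pc (cc f)"
  shows "Pun_map C Pc le rx f (cls (un_raw C Pc (cc f)) (un_pre C le rx (cc f)) x)
       = cls (un_raw C Pc (cd f)) (un_pre C le rx (cd f)) (mf f x)"
proof -
  interpret P: preo "un_raw C Pc (cd f)" "un_pre C le rx (cd f)" by (rule preo_raw)
  interpret Q: preo "un_raw C Pc (cc f)" "un_pre C le rx (cc f)" by (rule preo_raw)
  have 1: "(\<exists>y\<in>cls (un_raw C Pc (cc f)) (un_pre C le rx (cc f)) x.
             un_pre C le rx (cd f) (mf f y) z \<and> un_pre C le rx (cd f) z (mf f y))
          \<longleftrightarrow> un_pre C le rx (cd f) (mf f x) z \<and> un_pre C le rx (cd f) z (mf f x)"
    if z: "z \<in> un_raw C Pc (cd f)" for z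
  proof
    assume "\<exists>y\<in>cls (un_raw C Pc (cc f)) (un_pre C le rx (cc f)) x.
             un_pre C le rx (cd f) (mf f y) z \<and> un_pre C le rx (cd f) z (mf f y)"
    then obtain y where y: "y \<in> un_raw C Pc (cc f)" "un_pre C le rx (cc f) x y" "un_pre C le rx (cc f) y x"
      and yz: "un_pre C le rx (cd f) (mf f y) z" "un_pre C le rx (cd f) z (mf f y)"
      unfolding cls_def by blast
    have "un_pre C le rx (cd f) (mf f x) (mf f y)" "un_pre C le rx (cd f) (mf f y) (mf f x)"
      using mf_mono x y by blast+
    then show "un_pre C le rx (cd f) (mf f x) z \<and> un_pre C le rx (cd f) z (mf f x)"
      using P.trans mf_in x y z yz by blast
  next
    assume "un_pre C le rx (cd f) (mf f x) z \<and> un_pre C le rx (cd f) z (mf f x)"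
    then show "\<exists>y\<in>cls (un_raw C Pc (cc f)) (un_pre C le rx (cc f)) x.
             un_pre C le rx (cd f) (mf f y) z \<and> un_pre C le rx (cd f) z (mf f y)"
      using Q.self_cls[OF x] by blast
  qed
  show ?thesis
    unfolding Pun_map_def cls_def[of "un_raw C Pc (cd f)"] un_equiv_def
    using 1 by (auto simp: mf_def cls_def split: prod.splits)
qed

end

lemma (in dctx) joins_all:
  "\<forall>a\<in>un_raw C Pc A. \<forall>c\<in>un_raw C Pc A. \<exists>r. is_lub (un_raw C Pc A) (un_pre C le rx A) {a, c} r"
proof (intro ballI)
  fix a c assume "a \<in> un_raw C Pc A" "c \<in> un_raw C Pc A"
  then show "\<exists>r. is_lub (un_raw C Pc A) (un_pre C le rx A) {a, c} r"
    using join_ex by (cases a, cases c) blast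
qed

theorem proposition3:
  fixes C :: "('o, 'a) fpcat"
    and Pc :: "'o \<Rightarrow> 'e set"
    and le :: "'o \<Rightarrow> 'e \<Rightarrow> 'e \<Rightarrow> bool"
    and rx :: "'a \<Rightarrow> 'e \<Rightarrow> 'e"
  assumes "is_fp_category C"
    and "is_doctrine C Pc le rx"
    and "\<forall>A. has_finite_joins (Pc A) (le A)"
    and "\<forall>f. preserves_finite_joins (Pc (ccod C f)) (le (ccod C f))
                                    (Pc (cdom C f)) (le (cdom C f)) (rx f)"
  shows "(\<forall>A. has_finite_joins (Pun C Pc le rx A) (Pun_le C le rx A))
       \<and> (\<forall>f. preserves_finite_joins (Pun C Pc le rx (ccod C f)) (Pun_le C le rx (ccod C f))
                 (Pun C Pc le rx (cdom C f)) (Pun_le C le rx (cdom C f)) (Pun_map C Pc le rx f))"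
proof -
  interpret dctx C Pc le rx using assms by unfold_locales
  have UC: "\<And>A. un_class C Pc le rx A = cls (un_raw C Pc A) (un_pre C le rx A)"
    by (rule ext) (simp add: un_class_def cls_def un_equiv_def)
  have PunE: "\<And>A. Pun C Pc le rx A = cls (un_raw C Pc A) (un_pre C le rx A) ` un_raw C Pc A"
    by (simp add: Pun_def UC)
  have PleE: "\<And>A. Pun_le C le rx A = QL (un_pre C le rx A)"
    by (intro ext) (simp add: Pun_le_def QL_def)
  have bot: "\<exists>b. b \<in> un_raw C Pc A \<and> (\<forall>u\<in>un_raw C Pc A. un_pre C le rx A b u)" for A
  proof -
    obtain e where e: "is_lub (Pc (pr A T)) (le (pr A T)) {} e" using bot_ex by blast
    then have "(T, e) \<in> un_raw C Pc A" by (simp add: raw_iff is_lub_def)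
    then show ?thesis using bot_rep[OF e] by blast
  qed
  have 1: "\<forall>A. has_finite_joins (Pun C Pc le rx A) (Pun_le C le rx A)"
  proof
    fix A
    interpret P: preo "un_raw C Pc A" "un_pre C le rx A" by (rule preo_raw)
    obtain b where b: "b \<in> un_raw C Pc A" "\<forall>u\<in>un_raw C Pc A. un_pre C le rx A b u"
      using bot by blast
    show "has_finite_joins (Pun C Pc le rx A) (Pun_le C le rx A)"
      unfolding PunE PleE has_finite_joins_def
      using P.fin_joins[OF b joins_all] by blast
  qed
  have 2: "\<forall>f. preserves_finite_joins (Pun C Pc le rx (ccod C f)) (Pun_le C le rx (ccod C f))
                 (Pun C Pc le rx (cdom C f)) (Pun_le C le rx (cdom C f)) (Pun_map C Pc le rx f)"
  proof
    fix f
    obtain b where b: "b \<in> un_raw C Pc (cc f)" "\<forall>u\<in>un_raw C Pc (cc f). un_pre C le rx (cc f) b u"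
      using bot by blast
    show "preserves_finite_joins (Pun C Pc le rx (ccod C f)) (Pun_le C le rx (ccod C f))
                 (Pun C Pc le rx (cdom C f)) (Pun_le C le rx (cdom C f)) (Pun_map C Pc le rx f)"
      unfolding PunE PleE
    proof (rule pres[where m="mf f" and b=b])
      show "preo (un_raw C Pc (cc f)) (un_pre C le rx (cc f))" by (rule preo_raw)
      show "preo (un_raw C Pc (cd f)) (un_pre C le rx (cd f))" by (rule preo_raw)
      show "\<forall>x\<in>un_raw C Pc (cc f). mf f x \<in> un_raw C Pc (cd f)" using mf_in by blast
      show "\<forall>x\<in>un_raw C Pc (cc f). \<forall>y\<in>un_raw C Pc (cc f). un_pre C le rx (cc f) x y
              \<longrightarrow> un_pre C le rx (cd f) (mf f x) (mf f y)" using mf_mono by blast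
      show "b \<in> un_raw C Pc (cc f)" "\<forall>u\<in>un_raw C Pc (cc f). un_pre C le rx (cc f) b u" using b by auto
      show "\<forall>a\<in>un_raw C Pc (cc f). \<forall>c\<in>un_raw C Pc (cc f).
              \<exists>r. is_lub (un_raw C Pc (cc f)) (un_pre C le rx (cc f)) {a, c} r" by (rule joins_all)
      show "\<forall>b\<in>un_raw C Pc (cc f). (\<forall>u\<in>un_raw C Pc (cc f). un_pre C le rx (cc f) b u) \<longrightarrow>
              (\<forall>u\<in>un_raw C Pc (cd f). un_pre C le rx (cd f) (mf f b) u)" using mf_bot by blast
      show "\<forall>a\<in>un_raw C Pc (cc f). \<forall>c\<in>un_raw C Pc (cc f). \<forall>r.
              is_lub (un_raw C Pc (cc f)) (un_pre C le rx (cc f)) {a, c} r \<longrightarrow>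
              is_lub (un_raw C Pc (cd f)) (un_pre C le rx (cd f)) {mf f a, mf f c} (mf f r)"
        using mf_join by blast
      show "\<forall>x\<in>un_raw C Pc (cc f). Pun_map C Pc le rx f (cls (un_raw C Pc (cc f)) (un_pre C le rx (cc f)) x)
              = cls (un_raw C Pc (cd f)) (un_pre C le rx (cd f)) (mf f x)" using H_cls by blast
    qed
  qed
  show ?thesis using 1 2 by blast
qed

end
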